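(* Let $f:\mathbb{R}^n\to\mathbb{R}$ be bounded below, let $\mathcal{X}\subseteq\mathbb{R}^n$ be a set such that $\min_{\mathbf{x}}\{f(\mathbf{x}) : \mathbf{x}\in\mathcal{X}\}$ has an optimal solution, and let $p_f$ be any probability distribution whose support is $\mathcal{X}$. Let $(G^*, D^*_{G^*})$ be the globally optimal generator/discriminator pair for a GAN trained on $\mathbf{x}\sim p_f$, so that $D^*_{G^*}(\mathbf{x}) = \tfrac12$ if $p_f(\mathbf{x})>0$ and $D^*_{G^*}(\mathbf{x})=0$ if $p_f(\mathbf{x})=0$. Then for any $\lambda>0$ and any $\delta$, the problems $$\min_{\mathbf{x}}\Big\{ f(\mathbf{x}) + \lambda\big(\delta - \log D^*_{G^*}(\mathbf{x})\big)\Big\}\quad\text{and}\quad \min_{\mathbf{x}}\{f(\mathbf{x}) : \mathbf{x}\in\mathcal{X}\}$$ have the same optimal solutions.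
   Context: A GAN consists of a generator $G$ (mapping latent samples $\mathbf{z}\sim p_z$ to outputs with distribution $p_g$) and a discriminator $D$ with values in $[0,1]$, trained on the min–max loss $\min_G\max_D\{\mathbb{E}_{p_f}[\log D(\mathbf{x})] + \mathbb{E}_{p_z}[\log(1-D(G(\mathbf{z})))]\}$; a globally optimal pair solves this min–max problem. The convention $-\log 0 = +\infty$ is used. *)

theory Defs
  imports "HOL-Analysis.Analysis"
begin

definition neglog :: "real \<Rightarrow> ereal" where
  "neglog t = (if t = 0 then \<infinity> else ereal (- ln t))"

definition opt_disc :: "('a \<Rightarrow> real) \<Rightarrow> 'a \<Rightarrow> real" where
  "opt_disc p x = (if p x > 0 then 1/2 else 0)"

definition gan_obj :: "('a \<Rightarrow> real) \<Rightarrow> real \<Rightarrow> real \<Rightarrow> ('a \<Rightarrow> real) \<Rightarrow> 'a \<Rightarrow> ereal" where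
  "gan_obj f lam del D x = ereal (f x) + ereal lam * (ereal del + neglog (D x))"

end

theory Submission
  imports Defs
begin

theorem corollary1:
  fixes f :: "real ^ 'n \<Rightarrow> real" and X :: "(real ^ 'n) set"
    and p :: "real ^ 'n \<Rightarrow> real" and D :: "real ^ 'n \<Rightarrow> real"
    and lam del :: real
  assumes "bdd_below (range f)"
    and "\<exists>x. is_arg_min f (\<lambda>x. x \<in> X) x"
    and "\<forall>x. p x \<ge> 0"
    and "{x. p x > 0} = X"
    and "D = opt_disc p"
    and "lam > 0"
  shows "{x. is_arg_min (gan_obj f lam del D) (\<lambda>_. True) x}
       = {x. is_arg_min f (\<lambda>x. x \<in> X) x}"
proof -
  define c where "c = lam * (del + ln 2)"
  have g: "gan_obj f lam del D x = (if x \<in> X then ereal (f x + c) else \<infinity>)" for x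
  proof (cases "x \<in> X")
    case True
    then have "p x > 0" using assms(4) by auto
    then show ?thesis using True assms(5)
      by (simp add: gan_obj_def opt_disc_def neglog_def c_def ln_div)
  next
    case False
    then have "\<not> p x > 0" using assms(4) by auto
    then show ?thesis using False assms(5) assms(6)
      by (simp add: gan_obj_def opt_disc_def neglog_def)
  qed
  obtain x0 where x0: "is_arg_min f (\<lambda>x. x \<in> X) x0" using assms(2) by blast
  have x0X: "x0 \<in> X" using x0 by (simp add: is_arg_min_def)
  show ?thesis
  proof (intro set_eqI iffI; simp)
    fix x assume h: "is_arg_min (gan_obj f lam del D) (\<lambda>_. True) x"
    have xX: "x \<in> X"
    proof (rule ccontr)
      assume "x \<notin> X"
      then have "gan_obj f lam del D x0 < gan_obj f lam del D x" using x0X by (simp add: g)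
      then show False using h by (auto simp: is_arg_min_def)
    qed
    show "is_arg_min f (\<lambda>x. x \<in> X) x"
      unfolding is_arg_min_def
    proof (intro conjI notI, fact xX)
      assume "\<exists>y. y \<in> X \<and> f y < f x"
      then obtain y where "y \<in> X" "f y < f x" by blast
      then have "gan_obj f lam del D y < gan_obj f lam del D x" using xX by (simp add: g)
      then show False using h by (auto simp: is_arg_min_def)
    qed
  next
    fix x assume h: "is_arg_min f (\<lambda>x. x \<in> X) x"
    then have xX: "x \<in> X" by (simp add: is_arg_min_def)
    show "is_arg_min (gan_obj f lam del D) (\<lambda>_. True) x"
      unfolding is_arg_min_def
    proof (intro conjI notI, simp)
      assume "\<exists>y. True \<and> gan_obj f lam del D y < gan_obj f lam del D x"
      then obtain y where y: "gan_obj f lam del D y < gan_obj f lam del D x" by blast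
      then have "y \<in> X" using xX by (auto simp: g split: if_splits)
      then have "f y < f x" using y xX by (simp add: g)
      then show False using h \<open>y \<in> X\<close> by (auto simp: is_arg_min_def)
    qed
  qed
qed

end
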